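(* Fix $\epsilon>0$, a unitary $2\times2$ operator $R$ with $\det R=1$, and a Clifford+$T$ operator $U$. The following are equivalent: (1) there exists a unit scalar $\lambda$ such that $\|R-\lambda U\|\le\epsilon$; (2) there exists $n\in\mathbb Z$ such that $\|R-e^{in\pi/8}U\|\le\epsilon$.
   Context: Let $\omega=e^{i\pi/4}$, $H=\frac{1}{\sqrt2}\begin{bmatrix}1&1\\1&-1\end{bmatrix}$, $S=\begin{bmatrix}1&0\\0&i\end{bmatrix}$, $T=\begin{bmatrix}1&0\\0&\omega\end{bmatrix}$. A Clifford+$T$ operator is an element of the group generated by $\omega I$, $H$, $S$, $T$. $\|\cdot\|$ denotes the operator norm on $2\times2$ complex matrices. *)

theory Defs
  imports "HOL-Analysis.Analysis"
begin

type_synonym cmat2 = "complex^2^2"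

definition mat2 :: "complex \<Rightarrow> complex \<Rightarrow> complex \<Rightarrow> complex \<Rightarrow> cmat2" where
  "mat2 a b c d = (\<chi> i j. if i = 1 then (if j = 1 then a else b) else (if j = 1 then c else d))"

definition omega :: complex where "omega = exp (\<i> * of_real (pi / 4))"

definition Hgate :: cmat2 where
  "Hgate = mat2 (1 / of_real (sqrt 2)) (1 / of_real (sqrt 2)) (1 / of_real (sqrt 2)) (- 1 / of_real (sqrt 2))"

definition Sgate :: cmat2 where "Sgate = mat2 1 0 0 \<i>"

definition Tgate :: cmat2 where "Tgate = mat2 1 0 0 omega"

definition generator :: "cmat2 \<Rightarrow> bool" where
  "generator G \<longleftrightarrow> G = mat omega \<or> G = Hgate \<or> G = Sgate \<or> G = Tgate"

text \<open>The group generated by omega I, H, S, T (closure under left multiplication by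
  generators and their inverses, starting from the identity).\<close>
inductive clifford_T :: "cmat2 \<Rightarrow> bool" where
  ident: "clifford_T (mat 1)"
| gen: "generator G \<Longrightarrow> clifford_T U \<Longrightarrow> clifford_T (G ** U)"
| gen_inv: "generator G \<Longrightarrow> clifford_T U \<Longrightarrow> clifford_T (matrix_inv G ** U)"

definition adjoint2 :: "cmat2 \<Rightarrow> cmat2" where
  "adjoint2 A = (\<chi> i j. cnj (A $ j $ i))"

definition unitary2 :: "cmat2 \<Rightarrow> bool" where
  "unitary2 A \<longleftrightarrow> A ** adjoint2 A = mat 1 \<and> adjoint2 A ** A = mat 1"

text \<open>Operator norm w.r.t. the Euclidean norm on complex^2.\<close>
definition opnorm :: "cmat2 \<Rightarrow> real" where
  "opnorm A = onorm (\<lambda>x::complex^2. A *v x)"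

end

theory Submission
  imports Defs
begin


lemma cmat2_eq: "(A::cmat2) = B \<longleftrightarrow> A$1$1 = B$1$1 \<and> A$1$2 = B$1$2 \<and> A$2$1 = B$2$1 \<and> A$2$2 = B$2$2"
  by (auto simp: vec_eq_iff forall_2)

lemma cvec2_eq: "(x::complex^2) = y \<longleftrightarrow> x$1 = y$1 \<and> x$2 = y$2"
  by (auto simp: vec_eq_iff forall_2)

lemma mul_ent: "((A::cmat2) ** B)$i$j = A$i$1 * B$1$j + A$i$2 * B$2$j"
  by (simp add: matrix_matrix_mult_def sum_2)

lemma mv_ent: "((A::cmat2) *v x)$i = A$i$1 * x$1 + A$i$2 * x$2"
  by (simp add: matrix_vector_mult_def sum_2)

lemma mat_ent: "(mat c :: cmat2)$1$1 = c" "(mat c :: cmat2)$1$2 = 0" "(mat c :: cmat2)$2$1 = 0" "(mat c :: cmat2)$2$2 = c"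
  by (simp_all add: mat_def)

lemma adj_ent: "adjoint2 A $ i $ j = cnj (A$j$i)"
  by (simp add: adjoint2_def)

lemma mat2_ent: "mat2 a b c d $1$1 = a" "mat2 a b c d $1$2 = b" "mat2 a b c d $2$1 = c" "mat2 a b c d $2$2 = d"
  by (simp_all add: mat2_def)

lemma norm2_sq: "(norm (x::complex^2))^2 = (cmod (x$1))^2 + (cmod (x$2))^2"
  by (simp add: norm_vec_def L2_set_def sum_2)

lemma det2: "det (A::cmat2) = A$1$1 * A$2$2 - A$1$2 * A$2$1"
  by (rule det_2)



lemma sq_c: "complex_of_real ((cmod z)^2) = z * cnj z"
  by (rule complex_norm_square)

lemma norm_eq_from_sq: "(norm (x::complex^2))^2 = (norm (y::complex^2))^2 \<Longrightarrow> norm x = norm y"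
  by (simp add: power2_eq_iff_nonneg)

lemma unitary_ents:
  assumes "unitary2 U"
  shows "cnj (U$1$1) * U$1$1 + cnj (U$2$1) * U$2$1 = 1"
    "cnj (U$1$1) * U$1$2 + cnj (U$2$1) * U$2$2 = 0"
    "cnj (U$1$2) * U$1$1 + cnj (U$2$2) * U$2$1 = 0"
    "cnj (U$1$2) * U$1$2 + cnj (U$2$2) * U$2$2 = 1"
    "U$1$1 * cnj (U$1$1) + U$1$2 * cnj (U$1$2) = 1"
    "U$1$1 * cnj (U$2$1) + U$1$2 * cnj (U$2$2) = 0"
    "U$2$1 * cnj (U$1$1) + U$2$2 * cnj (U$1$2) = 0"
    "U$2$1 * cnj (U$2$1) + U$2$2 * cnj (U$2$2) = 1"
  using assms unfolding unitary2_def cmat2_eq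
  by (simp_all add: mul_ent adj_ent mat_ent)

lemma unitary_norm:
  assumes "unitary2 U"
  shows "norm (U *v x) = norm x"
proof (rule norm_eq_from_sq)
  note e = unitary_ents[OF assms]
  have "complex_of_real ((norm (U *v x))^2) = complex_of_real ((norm x)^2)"
    unfolding norm2_sq of_real_add sq_c mv_ent
    using e by simp algebra
  then show "(norm (U *v x))^2 = (norm x)^2" by (simp only: of_real_eq_iff)
qed



lemma su2_form:
  assumes "unitary2 W" "det W = 1"
  shows "W$2$2 = cnj (W$1$1)" "W$2$1 = - cnj (W$1$2)"
proof -
  note e = unitary_ents[OF assms(1)]
  have d: "W$1$1 * W$2$2 - W$1$2 * W$2$1 = 1" using assms(2) by (simp add: det2)
  show "W$2$2 = cnj (W$1$1)" using e d by algebra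
  show "W$2$1 = - cnj (W$1$2)" using e d by algebra
qed

lemma opnorm_ge:
  assumes "norm e = 1"
  shows "norm (A *v e) \<le> opnorm A"
  using onorm[OF matrix_vector_mul_bounded_linear[of A], of e] assms
  by (simp add: opnorm_def)

lemma keyB:
  assumes "unitary2 W" "det W = 1" "cmod \<nu> = 1"
  shows "\<exists>s::real. (s = 1 \<or> s = -1) \<and> opnorm (W - mat (of_real s)) \<le> opnorm (W - mat \<nu>)"
proof -
  note e = unitary_ents[OF assms(1)]
  note f = su2_form[OF assms(1,2)]
  define a where "a = W$1$1"
  define b where "b = W$1$2"
  have ab: "cnj a * a + cnj b * b = 1" using e(1) f unfolding a_def b_def by (simp add: mult.commute)
  define t where "t = Re a"
  define s :: real where "s = (if t \<ge> 0 then 1 else -1)"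
  have s2: "s * s = 1" by (simp add: s_def)
  have s2c: "complex_of_real s * complex_of_real s = 1" using s2 by (metis of_real_1 of_real_mult)
  have st: "s * t = \<bar>t\<bar>" by (simp add: s_def)
  have at: "a + cnj a = of_real (2 * t)" by (simp add: t_def complex_add_cnj)
  have "(cmod a)^2 + (cmod b)^2 = 1"
  proof -
    have "complex_of_real ((cmod a)^2 + (cmod b)^2) = 1" unfolding of_real_add sq_c using ab
      by (simp add: mult.commute)
    then show ?thesis by (metis of_real_eq_1_iff)
  qed
  then have "(cmod a)^2 \<le> 1" using zero_le_power2[of "cmod b"] by linarith
  then have "cmod a \<le> 1" using power2_le_imp_le[of "cmod a" 1] by simp
  then have "\<bar>t\<bar> \<le> 1" unfolding t_def using abs_Re_le_cmod[of a] by linarith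
  define r where "r = sqrt (2 - 2 * \<bar>t\<bar>)"
  have r0: "r \<ge> 0" using \<open>\<bar>t\<bar> \<le> 1\<close> by (simp add: r_def)
  have rr: "r^2 = 2 - 2 * \<bar>t\<bar>" using \<open>\<bar>t\<bar> \<le> 1\<close> by (simp add: r_def)
  have h1: "norm ((W - mat (of_real s)) *v x) = r * norm x" for x
  proof -
    have "complex_of_real ((norm ((W - mat (of_real s)) *v x))^2) = complex_of_real ((r * norm x)^2)"
    proof -
      have "complex_of_real ((norm ((W - mat (of_real s)) *v x))^2) =
        ((a - of_real s) * x$1 + b * x$2) * cnj ((a - of_real s) * x$1 + b * x$2)
        + (- cnj b * x$1 + (cnj a - of_real s) * x$2) * cnj (- cnj b * x$1 + (cnj a - of_real s) * x$2)"
        unfolding norm2_sq of_real_add sq_c mv_ent using f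
        by (simp add: mat_ent a_def b_def)
      also have "\<dots> = (2 - of_real s * (a + cnj a)) * (x$1 * cnj (x$1) + x$2 * cnj (x$2))"
        using ab s2c by simp algebra
      also have "\<dots> = complex_of_real ((r * norm x)^2)"
        unfolding power_mult_distrib rr norm2_sq of_real_mult of_real_add sq_c at
        by (simp add: algebra_simps st[symmetric])
      finally show ?thesis .
    qed
    then have "(norm ((W - mat (of_real s)) *v x))^2 = (r * norm x)^2" by (simp only: of_real_eq_iff)
    then show ?thesis using r0 by (simp add: power2_eq_iff_nonneg)
  qed
  have le1: "opnorm (W - mat (of_real s)) \<le> r"
    unfolding opnorm_def by (rule onorm_bound[OF r0]) (simp add: h1)
  define e1 :: "complex^2" where "e1 = vector [1, 0]"
  define e2 :: "complex^2" where "e2 = vector [0, 1]"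
  have ne1: "norm e1 = 1" "norm e2 = 1"
    by (simp_all add: e1_def e2_def norm_vec_def L2_set_def sum_2)
  have n1: "complex_of_real ((norm ((W - mat \<nu>) *v e1))^2) = 2 - (a * cnj \<nu> + cnj a * \<nu>)"
  proof -
    have nn: "\<nu> * cnj \<nu> = 1" using assms(3) sq_c[of \<nu>] by simp
    have v: "((W - mat \<nu>) *v e1)$1 = a - \<nu>" "((W - mat \<nu>) *v e1)$2 = - cnj b"
      using f by (simp_all add: mv_ent mat_ent a_def b_def e1_def)
    show ?thesis
      unfolding norm2_sq of_real_add sq_c v using ab nn by simp algebra
  qed
  have n2: "complex_of_real ((norm ((W - mat \<nu>) *v e2))^2) = 2 - (cnj a * cnj \<nu> + a * \<nu>)"
  proof -
    have nn: "\<nu> * cnj \<nu> = 1" using assms(3) sq_c[of \<nu>] by simp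
    have v: "((W - mat \<nu>) *v e2)$1 = b" "((W - mat \<nu>) *v e2)$2 = cnj a - \<nu>"
      using f by (simp_all add: mv_ent mat_ent a_def b_def e2_def)
    show ?thesis
      unfolding norm2_sq of_real_add sq_c v using ab nn by simp algebra
  qed
  have reps: "a * cnj \<nu> + cnj a * \<nu> = of_real (2 * (Re a * Re \<nu> + Im a * Im \<nu>))"
    "cnj a * cnj \<nu> + a * \<nu> = of_real (2 * (Re a * Re \<nu> - Im a * Im \<nu>))"
    by (simp_all add: complex_eq_iff)
  have rn: "\<bar>Re \<nu>\<bar> \<le> 1" using assms(3) abs_Re_le_cmod by (metis)
  have RR: "Re a * Re \<nu> \<le> \<bar>t\<bar>"
  proof -
    have "Re a * Re \<nu> \<le> \<bar>Re a\<bar> * \<bar>Re \<nu>\<bar>" by (metis abs_ge_self abs_mult)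
    also have "\<dots> \<le> \<bar>Re a\<bar>" using rn by (simp add: mult_left_le)
    finally show ?thesis by (simp add: t_def)
  qed
  have "\<exists>e. norm e = 1 \<and> r^2 \<le> (norm ((W - mat \<nu>) *v e))^2"
  proof (cases "Im a * Im \<nu> \<le> 0")
    case True
    have "complex_of_real ((norm ((W - mat \<nu>) *v e1))^2) = complex_of_real (2 - 2 * (Re a * Re \<nu> + Im a * Im \<nu>))"
      unfolding of_real_diff of_real_numeral n1 reps(1) ..
    then have "(norm ((W - mat \<nu>) *v e1))^2 = 2 - 2 * (Re a * Re \<nu> + Im a * Im \<nu>)"
      by (simp only: of_real_eq_iff)
    moreover have "r^2 \<le> 2 - 2 * (Re a * Re \<nu> + Im a * Im \<nu>)"
      using RR rr True by (simp only: distrib_left right_diff_distrib; linarith)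
    ultimately show ?thesis using ne1 by (intro exI[of _ e1]) simp
  next
    case False
    have "complex_of_real ((norm ((W - mat \<nu>) *v e2))^2) = complex_of_real (2 - 2 * (Re a * Re \<nu> - Im a * Im \<nu>))"
      unfolding of_real_diff of_real_numeral n2 reps(2) ..
    then have "(norm ((W - mat \<nu>) *v e2))^2 = 2 - 2 * (Re a * Re \<nu> - Im a * Im \<nu>)"
      by (simp only: of_real_eq_iff)
    moreover have "r^2 \<le> 2 - 2 * (Re a * Re \<nu> - Im a * Im \<nu>)"
      using RR rr False by (simp only: distrib_left right_diff_distrib; linarith)
    ultimately show ?thesis using ne1 by (intro exI[of _ e2]) simp
  qed
  then obtain e where "norm e = 1" "r^2 \<le> (norm ((W - mat \<nu>) *v e))^2" by blast
  then have "r \<le> norm ((W - mat \<nu>) *v e)" using r0 by (simp add: power2_le_iff_abs_le)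
  then have "r \<le> opnorm (W - mat \<nu>)" using opnorm_ge[OF \<open>norm e = 1\<close>, of "W - mat \<nu>"] by linarith
  then show ?thesis using le1 by (intro exI[of _ s]) (auto simp: s_def)
qed



lemma adj_mul: "adjoint2 ((A::cmat2) ** B) = adjoint2 B ** adjoint2 A"
  by (simp add: cmat2_eq adj_ent mul_ent mult.commute)

lemma adj_adj: "adjoint2 (adjoint2 A) = A"
  by (simp add: cmat2_eq adj_ent)

lemma unitary_mul: "unitary2 A \<Longrightarrow> unitary2 B \<Longrightarrow> unitary2 (A ** B)"
  unfolding unitary2_def adj_mul
  by (metis matrix_mul_assoc matrix_mul_rid)

lemma unitary_adj: "unitary2 A \<Longrightarrow> unitary2 (adjoint2 A)"
  unfolding unitary2_def adj_adj by simp

lemma det_adj: "det (adjoint2 A) = cnj (det A)"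
  by (simp add: det2 adj_ent)

lemma matrix_inv_unitary:
  assumes "unitary2 G" shows "matrix_inv G = adjoint2 G"
proof -
  have ex: "\<exists>A'. G ** A' = mat 1 \<and> A' ** G = mat 1" using assms unitary2_def by blast
  have "G ** matrix_inv G = mat 1 \<and> matrix_inv G ** G = mat 1"
    unfolding matrix_inv_def by (rule someI_ex[OF ex])
  then have "matrix_inv G ** G = mat 1" by blast
  then have "(matrix_inv G ** G) ** adjoint2 G = adjoint2 G" by simp
  then show ?thesis using assms unfolding unitary2_def by (metis matrix_mul_assoc matrix_mul_rid)
qed

lemma unitary_mat: "cmod k = 1 \<Longrightarrow> unitary2 (mat k)"
proof -
  assume "cmod k = 1"
  then have "k * cnj k = 1" using sq_c[of k] by simp
  then show ?thesis by (simp add: unitary2_def cmat2_eq mul_ent adj_ent mat_ent mult.commute)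
qed

lemma mat_comm: "mat c ** (A::cmat2) = A ** (mat c::cmat2)"
  by (simp add: cmat2_eq mul_ent mat_ent mult.commute)

lemma mat_mat: "mat a ** (mat b :: cmat2) = mat (a * b)"
  by (simp add: cmat2_eq mul_ent mat_ent)

lemma mul_diff: "(A::cmat2) ** ((B::cmat2) - C) = A ** B - A ** C"
  by (simp only: cmat2_eq mul_ent vector_minus_component) (simp add: algebra_simps)

lemma det_mat: "det (mat k :: cmat2) = k^2"
  by (simp add: det2 mat_ent power2_eq_square)

lemma omega8: "omega ^ 8 = 1"
proof -
  have "omega ^ 8 = exp (of_nat 8 * (\<i> * of_real (pi / 4)))"
    unfolding omega_def by (rule exp_of_nat_mult[symmetric])
  also have "\<dots> = exp (2 * pi * \<i>)" by (simp add: field_simps)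
  also have "\<dots> = 1" by simp
  finally show ?thesis .
qed

lemma omega_pow: "omega ^ n = exp (\<i> * of_real (real n * pi / 4))"
proof -
  have "omega ^ n = exp (of_nat n * (\<i> * of_real (pi / 4)))"
    unfolding omega_def by (rule exp_of_nat_mult[symmetric])
  then show ?thesis by (simp add: field_simps)
qed

lemma norm_omega: "cmod omega = 1"
  unfolding omega_def by (simp add: norm_exp_i_times)

lemma cnj_omega: "cnj omega = omega ^ 7"
proof -
  have a: "omega * cnj omega = 1" using sq_c[of omega] norm_omega by simp
  have "omega * omega ^ 7 = 1" using omega8 by (simp add: power_Suc[symmetric] del: power_Suc)
  then show ?thesis using a
    by (metis mult.left_commute mult.right_neutral)
qed


lemma oc: "omega * cnj omega = 1" "cnj omega * omega = 1" using sq_c[of omega] norm_omega by (simp_all add: mult.commute)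
lemma uT: "unitary2 Tgate" unfolding unitary2_def cmat2_eq
      by (simp add: Tgate_def mul_ent adj_ent mat_ent mat2_ent oc)
lemma s2: "complex_of_real (sqrt 2) * complex_of_real (sqrt 2) = 2"
  by (simp flip: of_real_mult)
lemma uH: "unitary2 Hgate" unfolding unitary2_def cmat2_eq
      by (simp add: Hgate_def mul_ent adj_ent mat_ent mat2_ent s2 divide_simps)
lemma dH: "det Hgate = -1" 
      by (simp add: Hgate_def det2 mat2_ent s2 divide_simps)
lemma uS: "unitary2 Sgate" unfolding unitary2_def cmat2_eq
      by (simp add: Sgate_def mul_ent adj_ent mat_ent mat2_ent)
lemma dS: "det Sgate = \<i>" by (simp add: Sgate_def det2 mat2_ent)
lemma dT: "det Tgate = omega" by (simp add: Tgate_def det2 mat2_ent)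

lemma omega2': "omega ^ 2 = \<i>"
proof -
  have "omega ^ 2 = exp (\<i> * of_real (pi / 2))" unfolding omega_pow by simp
  also have "\<dots> = \<i>" by (simp add: exp_eq_polar)
  finally show ?thesis .
qed

lemma omega4': "omega ^ 4 = -1"
proof -
  have "omega ^ 4 = (omega ^ 2)^2" by simp
  then show ?thesis by (simp add: omega2')
qed

lemma gen_props': "generator G \<Longrightarrow> unitary2 G \<and> (\<exists>k::nat. det G = omega ^ k)"
  unfolding generator_def
  using unitary_mat[OF norm_omega] det_mat[of omega] uH dH uS dS uT dT omega2' omega4'
  by (metis power_one_right)

lemma inv_case: 
  assumes "unitary2 G" "unitary2 U" "det G = omega ^ j" "det U = omega ^ k"
  shows "unitary2 (matrix_inv G ** U) \<and> (\<exists>k::nat. det (matrix_inv G ** U) = omega ^ k)"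
proof -
  have "det (matrix_inv G ** U) = omega ^ (7 * j + k)"
    unfolding matrix_inv_unitary[OF assms(1)] det_mul det_adj assms(3,4)
    by (simp add: cnj_omega power_add power_mult)
  moreover have "unitary2 (matrix_inv G ** U)"
    unfolding matrix_inv_unitary[OF assms(1)] by (rule unitary_mul[OF unitary_adj[OF assms(1)] assms(2)])
  ultimately show ?thesis by blast
qed


lemma clifford_props': "clifford_T U \<Longrightarrow> unitary2 U \<and> (\<exists>k::nat. det U = omega ^ k)"
proof (induction rule: clifford_T.induct)
  case ident
  then show ?case by (metis norm_one unitary_mat det_mat one_power2 power_0)
next
  case (gen G U)
  then obtain j k where "det G = omega ^ j" "det U = omega ^ k" using gen_props' by blast
  then have "det (G ** U) = omega ^ (j + k)" by (simp add: det_mul power_add)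
  then show ?case using gen gen_props' unitary_mul by blast
next
  case (gen_inv G U)
  then obtain j k where j: "det G = omega ^ j" and k: "det U = omega ^ k" using gen_props' by blast
  have uG: "unitary2 G" using gen_inv gen_props' by blast
  show ?case using inv_case[OF uG _ j k] gen_inv by blast
qed

lemma opnorm_cong: "(\<And>x. norm ((A::cmat2) *v x) = norm ((B::cmat2) *v x)) \<Longrightarrow> opnorm A = opnorm B"
  unfolding opnorm_def onorm_def by simp

theorem lemma7p18:
  fixes \<epsilon> :: real and R U :: cmat2
  assumes "\<epsilon> > 0" and "unitary2 R" and "det R = 1" and "clifford_T U"
  shows "(\<exists>c::complex. norm c = 1 \<and> opnorm (R - mat c ** U) \<le> \<epsilon>) \<longleftrightarrow>
         (\<exists>n::int. opnorm (R - mat (exp (\<i> * of_real (of_int n * pi / 8))) ** U) \<le> \<epsilon>)"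
proof
  assume "\<exists>n::int. opnorm (R - mat (exp (\<i> * of_real (of_int n * pi / 8))) ** U) \<le> \<epsilon>"
  then show "\<exists>c::complex. norm c = 1 \<and> opnorm (R - mat c ** U) \<le> \<epsilon>"
    by (metis norm_exp_i_times)
next
  assume "\<exists>c::complex. norm c = 1 \<and> opnorm (R - mat c ** U) \<le> \<epsilon>"
  then obtain c where c1: "norm c = 1" and cle: "opnorm (R - mat c ** U) \<le> \<epsilon>" by blast
  obtain k where uU: "unitary2 U" and k: "det U = omega ^ k" using clifford_props'[OF assms(4)] by blast
  define n0 :: int where "n0 = int (7 * k)"
  define \<mu> where "\<mu> = exp (\<i> * of_real (of_int n0 * pi / 8))"
  have m1: "cmod \<mu> = 1" unfolding \<mu>_def by (rule norm_exp_i_times)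
  have mm: "cnj \<mu> * \<mu> = 1" using sq_c[of \<mu>] m1 by (simp add: mult.commute)
  have m2: "\<mu> ^ 2 = omega ^ (7 * k)"
  proof -
    have "\<mu> ^ 2 = exp (of_nat 2 * (\<i> * of_real (of_int n0 * pi / 8)))"
      unfolding \<mu>_def by (rule exp_of_nat_mult[symmetric])
    also have "\<dots> = omega ^ (7 * k)" unfolding omega_pow n0_def
      by (simp add: field_simps)
    finally show ?thesis .
  qed
  define Y where "Y = mat (cnj \<mu>) ** adjoint2 U"
  have uY: "unitary2 Y" unfolding Y_def
    by (rule unitary_mul[OF unitary_mat unitary_adj[OF uU]]) (simp add: m1)
  have YU: "Y ** U = mat (cnj \<mu>)"
    using uU unfolding Y_def unitary2_def by (metis matrix_mul_assoc matrix_mul_rid)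
  define W where "W = Y ** R"
  have uW: "unitary2 W" unfolding W_def by (rule unitary_mul[OF uY assms(2)])
  have dW: "det W = 1"
  proof -
    have "det W = cnj (\<mu> ^ 2 * omega ^ k)"
      unfolding W_def Y_def det_mul det_mat det_adj k assms(3) by simp
    also have "\<mu> ^ 2 * omega ^ k = omega ^ (8 * k)" unfolding m2 by (simp add: power_add[symmetric])
    also have "\<dots> = 1" by (simp add: power_mult omega8)
    finally show ?thesis by simp
  qed
  have T: "opnorm (R - mat d ** U) = opnorm (W - mat (d * cnj \<mu>))" for d
  proof (rule opnorm_cong)
    fix x
    have "Y ** (R - mat d ** U) = W - mat (d * cnj \<mu>)"
    proof -
      have "Y ** (mat d ** U) = mat (cnj \<mu>) ** mat d"
        by (metis YU mat_comm matrix_mul_assoc)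
      then show ?thesis unfolding mul_diff W_def mat_mat by (simp add: mult.commute)
    qed
    then show "norm ((R - mat d ** U) *v x) = norm ((W - mat (d * cnj \<mu>)) *v x)"
      using unitary_norm[OF uY, of "(R - mat d ** U) *v x"] by (simp add: matrix_vector_mul_assoc)
  qed
  have nu1: "cmod (c * cnj \<mu>) = 1" using c1 m1 by (simp add: norm_mult)
  obtain s :: real where s: "s = 1 \<or> s = -1"
    and sle: "opnorm (W - mat (of_real s)) \<le> opnorm (W - mat (c * cnj \<mu>))"
    using keyB[OF uW dW nu1] by blast
  have fin: "opnorm (R - mat (of_real s * \<mu>) ** U) \<le> \<epsilon>"
  proof -
    have "opnorm (R - mat (of_real s * \<mu>) ** U) = opnorm (W - mat (of_real s))"
      unfolding T using mm by (simp add: mult.assoc mult.commute[of \<mu>])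
    then show ?thesis using sle cle T[of c] by linarith
  qed
  show "\<exists>n::int. opnorm (R - mat (exp (\<i> * of_real (of_int n * pi / 8))) ** U) \<le> \<epsilon>"
  proof (cases "s = 1")
    case True
    then show ?thesis using fin unfolding \<mu>_def by (intro exI[of _ n0]) simp
  next
    case False
    then have sm: "s = -1" using s by blast
    have "exp (\<i> * of_real (of_int (n0 + 8) * pi / 8)) = exp (\<i> * of_real (of_int n0 * pi / 8) + of_real pi * \<i>)"
      by (simp add: field_simps)
    also have "\<dots> = - \<mu>" unfolding exp_add \<mu>_def by simp
    finally show ?thesis using fin sm by (intro exI[of _ "n0 + 8"]) simp
  qed
qed

end
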